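(* Let $\mathsf{Prop}$ be a non-empty finite set of propositions and $\mathsf{L}$ any fragment of $\mathsf{CTL}(\mathsf{Prop})$. For every sample $\mathcal{S}=(\mathcal{P},\mathcal{N})$ of Kripke structures in $\mathcal{K}(\mathsf{Prop})$, if there is an $\mathcal{S}$-separating $\mathsf{L}$-formula, then there is one of size at most $2^n$, where $n:=\sum_{K\in\mathcal{P}\cup\mathcal{N}}|Q_K|$.
   Context: $\mathsf{CTL}(\mathsf{Prop})$-formulas: $\varphi::=p\mid\neg\varphi\mid\varphi\vee\varphi\mid\varphi\wedge\varphi\mid\mathcal{Q}\mathbf{X}\varphi\mid\mathcal{Q}\mathbf{F}\varphi\mid\mathcal{Q}\mathbf{G}\varphi\mid\mathcal{Q}(\varphi\,\mathbf{U}\,\varphi)$ with $p\in\mathsf{Prop}$, $\mathcal{Q}\in\{\exists,\forall\}$. A fragment is given by a subset of these operators; its formulas use only them. $\mathsf{sz}(\varphi)$ is the number of distinct subformulas. $\mathcal{K}(\mathsf{Prop})$: actionless Kripke structures $K=(Q,I,\delta,P,\pi)$ with $Q=Q_K$ finite non-empty, $I\subseteq Q$ non-empty, $\delta:Q\to2^Q$, $P\subseteq\mathsf{Prop}$, $\pi:Q\to2^P$. $\mathsf{Path}(q)$: infinite $\rho\in q\cdot Q^\omega$ with $\rho[i+1]\in\delta(\rho[i])$ for all $i$. Semantics: $q\models p$ iff $p\in\pi(q)$; Boolean connectives as usual; $q\models\mathcal{Q}\mathbf{X}\varphi$ iff $\mathcal{Q}\rho\in\mathsf{Path}(q)$, $\rho[1]\models\varphi$;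 $q\models\mathcal{Q}\mathbf{F}\varphi$ iff $\mathcal{Q}\rho\in\mathsf{Path}(q)$, $\exists i$, $\rho[i]\models\varphi$; $q\models\mathcal{Q}\mathbf{G}\varphi$ iff $\mathcal{Q}\rho\in\mathsf{Path}(q)$, $\forall i$, $\rho[i]\models\varphi$; $q\models\mathcal{Q}(\varphi_1\mathbf{U}\varphi_2)$ iff $\mathcal{Q}\rho\in\mathsf{Path}(q)$, $\exists i$, $\rho[i]\models\varphi_2$ and $\forall j<i$, $\rho[j]\models\varphi_1$. $K\models\varphi$ iff $q\models\varphi$ for all $q\in I$. A sample is a pair of finite sets of structures; a formula is $\mathcal{S}$-separating if satisfied by all structures in $\mathcal{P}$ and by none in $\mathcal{N}$. *)

theory Defs
  imports Main
begin

datatype 'p ctl =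
    Atom 'p
  | Neg "'p ctl"
  | Or "'p ctl" "'p ctl"
  | And "'p ctl" "'p ctl"
  | ExX "'p ctl" | AllX "'p ctl"
  | ExF "'p ctl" | AllF "'p ctl"
  | ExG "'p ctl" | AllG "'p ctl"
  | ExU "'p ctl" "'p ctl" | AllU "'p ctl" "'p ctl"

text \<open>Operators from which a fragment is built (atoms are always allowed).\<close>
datatype ctl_op = OpNeg | OpOr | OpAnd | OpEX | OpAX | OpEF | OpAF | OpEG | OpAG | OpEU | OpAU

fun in_frag :: "ctl_op set \<Rightarrow> 'p set \<Rightarrow> 'p ctl \<Rightarrow> bool" where
  "in_frag L Pr (Atom p) = (p \<in> Pr)"
| "in_frag L Pr (Neg f) = (OpNeg \<in> L \<and> in_frag L Pr f)"
| "in_frag L Pr (Or f g) = (OpOr \<in> L \<and> in_frag L Pr f \<and> in_frag L Pr g)"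
| "in_frag L Pr (And f g) = (OpAnd \<in> L \<and> in_frag L Pr f \<and> in_frag L Pr g)"
| "in_frag L Pr (ExX f) = (OpEX \<in> L \<and> in_frag L Pr f)"
| "in_frag L Pr (AllX f) = (OpAX \<in> L \<and> in_frag L Pr f)"
| "in_frag L Pr (ExF f) = (OpEF \<in> L \<and> in_frag L Pr f)"
| "in_frag L Pr (AllF f) = (OpAF \<in> L \<and> in_frag L Pr f)"
| "in_frag L Pr (ExG f) = (OpEG \<in> L \<and> in_frag L Pr f)"
| "in_frag L Pr (AllG f) = (OpAG \<in> L \<and> in_frag L Pr f)"
| "in_frag L Pr (ExU f g) = (OpEU \<in> L \<and> in_frag L Pr f \<and> in_frag L Pr g)"
| "in_frag L Pr (AllU f g) = (OpAU \<in> L \<and> in_frag L Pr f \<and> in_frag L Pr g)"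

fun subformulas :: "'p ctl \<Rightarrow> 'p ctl set" where
  "subformulas (Atom p) = {Atom p}"
| "subformulas (Neg f) = insert (Neg f) (subformulas f)"
| "subformulas (Or f g) = insert (Or f g) (subformulas f \<union> subformulas g)"
| "subformulas (And f g) = insert (And f g) (subformulas f \<union> subformulas g)"
| "subformulas (ExX f) = insert (ExX f) (subformulas f)"
| "subformulas (AllX f) = insert (AllX f) (subformulas f)"
| "subformulas (ExF f) = insert (ExF f) (subformulas f)"
| "subformulas (AllF f) = insert (AllF f) (subformulas f)"
| "subformulas (ExG f) = insert (ExG f) (subformulas f)"
| "subformulas (AllG f) = insert (AllG f) (subformulas f)"
| "subformulas (ExU f g) = insert (ExU f g) (subformulas f \<union> subformulas g)"
| "subformulas (AllU f g) = insert (AllU f g) (subformulas f \<union> subformulas g)"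

definition sz :: "'p ctl \<Rightarrow> nat" where
  "sz f = card (subformulas f)"

record ('s, 'p) kripke =
  states :: "'s set"
  init :: "'s set"
  trans :: "'s \<Rightarrow> 's set"
  props :: "'p set"
  lab :: "'s \<Rightarrow> 'p set"

definition kripke_in :: "'p set \<Rightarrow> ('s, 'p) kripke \<Rightarrow> bool" where
  "kripke_in Pr K \<longleftrightarrow>
     finite (states K) \<and> states K \<noteq> {} \<and>
     init K \<subseteq> states K \<and> init K \<noteq> {} \<and>
     (\<forall>q \<in> states K. trans K q \<subseteq> states K) \<and>
     props K \<subseteq> Pr \<and>
     (\<forall>q \<in> states K. lab K q \<subseteq> props K)"

definition paths :: "('s, 'p) kripke \<Rightarrow> 's \<Rightarrow> (nat \<Rightarrow> 's) set" where
  "paths K q = {\<rho>. \<rho> 0 = q \<and> (\<forall>i. \<rho> (Suc i) \<in> trans K (\<rho> i))}"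

fun sat :: "('s, 'p) kripke \<Rightarrow> 's \<Rightarrow> 'p ctl \<Rightarrow> bool" where
  "sat K q (Atom p) = (p \<in> lab K q)"
| "sat K q (Neg f) = (\<not> sat K q f)"
| "sat K q (Or f g) = (sat K q f \<or> sat K q g)"
| "sat K q (And f g) = (sat K q f \<and> sat K q g)"
| "sat K q (ExX f) = (\<exists>\<rho> \<in> paths K q. sat K (\<rho> 1) f)"
| "sat K q (AllX f) = (\<forall>\<rho> \<in> paths K q. sat K (\<rho> 1) f)"
| "sat K q (ExF f) = (\<exists>\<rho> \<in> paths K q. \<exists>i. sat K (\<rho> i) f)"
| "sat K q (AllF f) = (\<forall>\<rho> \<in> paths K q. \<exists>i. sat K (\<rho> i) f)"
| "sat K q (ExG f) = (\<exists>\<rho> \<in> paths K q. \<forall>i. sat K (\<rho> i) f)"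
| "sat K q (AllG f) = (\<forall>\<rho> \<in> paths K q. \<forall>i. sat K (\<rho> i) f)"
| "sat K q (ExU f g) = (\<exists>\<rho> \<in> paths K q. \<exists>i. sat K (\<rho> i) g \<and> (\<forall>j<i. sat K (\<rho> j) f))"
| "sat K q (AllU f g) = (\<forall>\<rho> \<in> paths K q. \<exists>i. sat K (\<rho> i) g \<and> (\<forall>j<i. sat K (\<rho> j) f))"

definition models :: "('s, 'p) kripke \<Rightarrow> 'p ctl \<Rightarrow> bool" where
  "models K f \<longleftrightarrow> (\<forall>q \<in> init K. sat K q f)"

definition separating :: "('s, 'p) kripke set \<Rightarrow> ('s, 'p) kripke set \<Rightarrow> 'p ctl \<Rightarrow> bool" where
  "separating Pos Negs f \<longleftrightarrow> (\<forall>K \<in> Pos. models K f) \<and> (\<forall>K \<in> Negs. \<not> models K f)"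

end

theory Submission
  imports Defs
begin

fun rp :: "'p ctl \<Rightarrow> 'p ctl \<Rightarrow> 'p ctl \<Rightarrow> 'p ctl" where
  "rp h g (Atom p) = (if Atom p = h then g else Atom p)"
| "rp h g (Neg f) = (if Neg f = h then g else Neg (rp h g f))"
| "rp h g (Or f1 f2) = (if Or f1 f2 = h then g else Or (rp h g f1) (rp h g f2))"
| "rp h g (And f1 f2) = (if And f1 f2 = h then g else And (rp h g f1) (rp h g f2))"
| "rp h g (ExX f) = (if ExX f = h then g else ExX (rp h g f))"
| "rp h g (AllX f) = (if AllX f = h then g else AllX (rp h g f))"
| "rp h g (ExF f) = (if ExF f = h then g else ExF (rp h g f))"
| "rp h g (AllF f) = (if AllF f = h then g else AllF (rp h g f))"
| "rp h g (ExG f) = (if ExG f = h then g else ExG (rp h g f))"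
| "rp h g (AllG f) = (if AllG f = h then g else AllG (rp h g f))"
| "rp h g (ExU f1 f2) = (if ExU f1 f2 = h then g else ExU (rp h g f1) (rp h g f2))"
| "rp h g (AllU f1 f2) = (if AllU f1 f2 = h then g else AllU (rp h g f1) (rp h g f2))"

lemma rp_frag: "in_frag L Pr f \<Longrightarrow> in_frag L Pr g \<Longrightarrow> in_frag L Pr (rp h g f)"
  by (induction f) auto

lemma sub_self: "f \<in> subformulas f"
  by (cases f) auto

lemma sub_frag: "k \<in> subformulas f \<Longrightarrow> in_frag L Pr f \<Longrightarrow> in_frag L Pr k"
  by (induction f) auto

lemma sub_size: "k \<in> subformulas f \<Longrightarrow> k = f \<or> size k < size f"
  by (induction f) auto

lemma sub_trans: "k \<in> subformulas f \<Longrightarrow> subformulas k \<subseteq> subformulas f"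
  by (induction f) (auto simp: sub_self)

lemma sub_finite: "finite (subformulas f)"
  by (induction f) auto

lemma rp_id: "h \<notin> subformulas k \<Longrightarrow> rp h g k = k"
  by (induction k) (auto simp: sub_self)

lemma rp_sub: "subformulas (rp h g f) \<subseteq> rp h g ` subformulas f \<union> subformulas g"
  by (induction f) auto

lemma path_in:
  assumes "\<forall>q\<in>states K. trans K q \<subseteq> states K" "\<rho> \<in> paths K q" "q \<in> states K"
  shows "\<rho> i \<in> states K"
  using assms by (induction i) (auto simp: paths_def)

lemma rp_sat:
  assumes cl: "\<forall>q\<in>states K. trans K q \<subseteq> states K"
    and eq: "\<forall>q\<in>states K. sat K q h = sat K q g"
  shows "q \<in> states K \<Longrightarrow> sat K q (rp h g f) = sat K q f"
proof (induction f arbitrary: q)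
  case (ExX f)
  have hyp: "\<forall>\<rho>\<in>paths K q. \<forall>i. sat K (\<rho> i) (rp h g f) = sat K (\<rho> i) f"
    using ExX path_in[OF cl] by blast
  show ?case
  proof (cases "h = ExX f")
    case True then show ?thesis using eq[rule_format, OF ExX.prems] by simp
  next
    case False then show ?thesis using hyp by auto
  qed
next
  case (AllX f)
  have hyp: "\<forall>\<rho>\<in>paths K q. \<forall>i. sat K (\<rho> i) (rp h g f) = sat K (\<rho> i) f"
    using AllX path_in[OF cl] by blast
  show ?case
  proof (cases "h = AllX f")
    case True then show ?thesis using eq[rule_format, OF AllX.prems] by simp
  next
    case False then show ?thesis using hyp by auto
  qed
next
  case (ExF f)
  have hyp: "\<forall>\<rho>\<in>paths K q. \<forall>i. sat K (\<rho> i) (rp h g f) = sat K (\<rho> i) f"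
    using ExF path_in[OF cl] by blast
  show ?case
  proof (cases "h = ExF f")
    case True then show ?thesis using eq[rule_format, OF ExF.prems] by simp
  next
    case False then show ?thesis using hyp by auto
  qed
next
  case (AllF f)
  have hyp: "\<forall>\<rho>\<in>paths K q. \<forall>i. sat K (\<rho> i) (rp h g f) = sat K (\<rho> i) f"
    using AllF path_in[OF cl] by blast
  show ?case
  proof (cases "h = AllF f")
    case True then show ?thesis using eq[rule_format, OF AllF.prems] by simp
  next
    case False then show ?thesis using hyp by auto
  qed
next
  case (ExG f)
  have hyp: "\<forall>\<rho>\<in>paths K q. \<forall>i. sat K (\<rho> i) (rp h g f) = sat K (\<rho> i) f"
    using ExG path_in[OF cl] by blast
  show ?case
  proof (cases "h = ExG f")
    case True then show ?thesis using eq[rule_format, OF ExG.prems] by simp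
  next
    case False then show ?thesis using hyp by auto
  qed
next
  case (AllG f)
  have hyp: "\<forall>\<rho>\<in>paths K q. \<forall>i. sat K (\<rho> i) (rp h g f) = sat K (\<rho> i) f"
    using AllG path_in[OF cl] by blast
  show ?case
  proof (cases "h = AllG f")
    case True then show ?thesis using eq[rule_format, OF AllG.prems] by simp
  next
    case False then show ?thesis using hyp by auto
  qed
next
  case (ExU f1 f2)
  have hyp: "\<forall>\<rho>\<in>paths K q. \<forall>i. sat K (\<rho> i) (rp h g f1) = sat K (\<rho> i) f1"
    using ExU path_in[OF cl] by blast
  moreover have hyp2: "\<forall>\<rho>\<in>paths K q. \<forall>i. sat K (\<rho> i) (rp h g f2) = sat K (\<rho> i) f2"
    using ExU path_in[OF cl] by blast
  show ?case
  proof (cases "h = ExU f1 f2")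
    case True then show ?thesis using eq[rule_format, OF ExU.prems] by simp
  next
    case False then show ?thesis using hyp hyp2 by auto
  qed
next
  case (AllU f1 f2)
  have hyp: "\<forall>\<rho>\<in>paths K q. \<forall>i. sat K (\<rho> i) (rp h g f1) = sat K (\<rho> i) f1"
    using AllU path_in[OF cl] by blast
  moreover have hyp2: "\<forall>\<rho>\<in>paths K q. \<forall>i. sat K (\<rho> i) (rp h g f2) = sat K (\<rho> i) f2"
    using AllU path_in[OF cl] by blast
  show ?case
  proof (cases "h = AllU f1 f2")
    case True then show ?thesis using eq[rule_format, OF AllU.prems] by simp
  next
    case False then show ?thesis using hyp hyp2 by auto
  qed
qed (use eq in auto)

lemma rp_self: "rp h g h = g"
  by (cases h) auto

lemma card_img_less:
  assumes "finite S" "a \<in> S" "b \<in> S" "a \<noteq> b" "F a = F b"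
  shows "card (F ` S) < card S"
proof -
  have "F ` S \<subseteq> F ` (S - {b})"
  proof
    fix y assume "y \<in> F ` S"
    then obtain x where x: "x \<in> S" "y = F x" by blast
    show "y \<in> F ` (S - {b})"
    proof (cases "x = b")
      case True
      then have "y = F a" "a \<in> S - {b}" using x assms by auto
      then show ?thesis by blast
    next
      case False then show ?thesis using x by blast
    qed
  qed
  hence "card (F ` S) \<le> card (F ` (S - {b}))" using assms(1) by (simp add: card_mono)
  also have "\<dots> \<le> card (S - {b})" by (rule card_image_le) (use assms(1) in simp)
  finally have "card (F ` S) \<le> card (S - {b})" .
  also have "\<dots> < card S" by (rule card_Diff1_less) (use assms in auto)
  finally show ?thesis .
qed

theorem corollary4:
  fixes Pr :: "'p set" and L :: "ctl_op set"
    and Pos Negs :: "('s, 'p) kripke set"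
  assumes "finite Pr" and "Pr \<noteq> {}"
    and "finite Pos" and "finite Negs"
    and "\<forall>K \<in> Pos \<union> Negs. kripke_in Pr K"
    and "\<exists>f. in_frag L Pr f \<and> separating Pos Negs f"
  shows "\<exists>f. in_frag L Pr f \<and> separating Pos Negs f \<and>
           sz f \<le> 2 ^ (\<Sum>K \<in> Pos \<union> Negs. card (states K))"
proof -
  define PN where "PN = Pos \<union> Negs"
  define ch where "ch k = {(K,q). K \<in> PN \<and> q \<in> states K \<and> sat K q k}" for k
  let ?P = "\<lambda>f. in_frag L Pr f \<and> separating Pos Negs f"
  obtain f where f: "?P f" and fmin: "\<forall>f'. ?P f' \<longrightarrow> sz f \<le> sz f'"
    using assms(6) ex_has_least_nat[of ?P _ sz] by metis
  have inj: "inj_on ch (subformulas f)"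
  proof (rule inj_onI, rule ccontr)
    fix g h assume g: "g \<in> subformulas f" and h: "h \<in> subformulas f" and e: "ch g = ch h"
      and ne: "g \<noteq> h"
    have "\<exists>a b. a \<in> subformulas f \<and> b \<in> subformulas f \<and> a \<noteq> b \<and> ch a = ch b \<and> b \<notin> subformulas a"
    proof (cases "h \<in> subformulas g")
      case False then show ?thesis using g h e ne by blast
    next
      case True
      have "g \<notin> subformulas h"
        using True ne sub_size[of h g] sub_size[of g h] by auto
      then show ?thesis using g h e ne by metis
    qed
    then obtain a b where a: "a \<in> subformulas f" and b: "b \<in> subformulas f" and ab: "a \<noteq> b"
      and eab: "ch a = ch b" and ba: "b \<notin> subformulas a" by blast
    define f' where "f' = rp b a f"
    have frag: "in_frag L Pr f'"
      unfolding f'_def using f a rp_frag sub_frag by blast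
    have sem: "sat K q f' = sat K q f" if K: "K \<in> PN" and q: "q \<in> states K" for K q
    proof -
      have cl: "\<forall>q\<in>states K. trans K q \<subseteq> states K"
        using assms(5) K unfolding PN_def kripke_in_def by blast
      have eq: "\<forall>q\<in>states K. sat K q b = sat K q a"
      proof
        fix q assume "q \<in> states K"
        then show "sat K q b = sat K q a"
          using eab K unfolding ch_def by (auto simp: set_eq_iff)
      qed
      show ?thesis unfolding f'_def using rp_sat[OF cl eq q] .
    qed
    have sep: "separating Pos Negs f'"
    proof -
      have "models K f' = models K f" if K: "K \<in> PN" for K
      proof -
        have "init K \<subseteq> states K" using assms(5) K unfolding PN_def kripke_in_def by blast
        then show ?thesis unfolding models_def using sem[OF K] by blast
      qed
      then show ?thesis using f unfolding separating_def PN_def by auto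
    qed
    have "subformulas f' \<subseteq> rp b a ` subformulas f"
    proof -
      have "subformulas a \<subseteq> rp b a ` subformulas f"
      proof
        fix k assume k: "k \<in> subformulas a"
        have "b \<notin> subformulas k" using sub_trans[OF k] ba by blast
        hence "rp b a k = k" by (rule rp_id)
        moreover have "k \<in> subformulas f" using sub_trans[OF a] k by blast
        ultimately show "k \<in> rp b a ` subformulas f" by (metis image_eqI)
      qed
      then show ?thesis unfolding f'_def using rp_sub[of b a f] by blast
    qed
    moreover have "card (rp b a ` subformulas f) < card (subformulas f)"
    proof (rule card_img_less[OF sub_finite a b ab])
      have "b \<notin> subformulas a" by (rule ba)
      then show "rp b a a = rp b a b" by (simp add: rp_id rp_self)
    qed
    ultimately have "sz f' < sz f" unfolding sz_def
      by (meson card_mono finite_imageI sub_finite le_less_trans)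
    then show False using fmin frag sep by fastforce
  qed
  have fin: "finite PN" using assms(3,4) unfolding PN_def by blast
  have finS: "\<forall>K\<in>PN. finite (states K)" using assms(5) unfolding PN_def kripke_in_def by blast
  have "ch ` subformulas f \<subseteq> Pow (Sigma PN states)" unfolding ch_def by auto
  hence "card (ch ` subformulas f) \<le> card (Pow (Sigma PN states))"
    by (meson card_mono finite_Pow_iff finite_SigmaI fin finS)
  also have "\<dots> = 2 ^ card (Sigma PN states)"
    using fin finS by (simp add: card_Pow)
  also have "card (Sigma PN states) = (\<Sum>K\<in>PN. card (states K))"
    using card_SigmaI[OF fin finS] by simp
  finally have "sz f \<le> 2 ^ (\<Sum>K\<in>PN. card (states K))"
    unfolding sz_def using card_image[OF inj] by simp
  then show ?thesis using f unfolding PN_def by blast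
qed

end
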